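(* In the setting described in the context, there is a bound $\theta_{\max}$ which is $O(N^2)$ as a function of the number of channels $N$ such that, at every step $l$ of the projected subgradient updating performed within the DCDM algorithm, $\|\theta(\lambda^{(l)})\|_2\le\theta_{\max}$.
   Context: Setting: a source communicates with $K$ users through a single relay over $N$ channels. Given data: user weights $w_1,\dots,w_K\ge0$ with $\sum_kw_k=1$; nonnegative channel power gains $a_m$, $b_{nk}$, $c_{mk}$ ($1\le m,n\le N$, $1\le k\le K$); power limits $P_s,P_r,P_t>0$. Logarithms are base 2; $R_{mnk}(p^s,p^r)=\tfrac12\min\{\log(1+a_mp^s),\log(1+c_{mk}p^s+b_{nk}p^r)\}$. For $\lambda=(\lambda_s,\lambda_r,\lambda_t)\succeq0$ the dual function of the relaxed problem is $g(\lambda)=\max[\sum_{m,n,k}\frac{w_k}{2}\tilde\phi_{mnk}\min\{\log(1+a_mP^s_{mnk}/\tilde\phi_{mnk}),\log(1+c_{mk}P^s_{mnk}/\tilde\phi_{mnk}+b_{nk}P^r_{mnk}/\tilde\phi_{mnk})\}-(\lambda_s+\lambda_t)\sum P^s_{mnk}-(\lambda_r+\lambda_t)\sum P^r_{mnk}]+\lambda_sP_s+\lambda_rP_r+\lambda_tP_t$, the max over $\tilde\phi_{mnk}\in[0,1]$ with $\sum_{n,k}\tilde\phi_{mnk}=1\ \forall m$, $\sum_{m,k}\tilde\phi_{mnk}=1\ \forall n$ and $P^s,P^r\ge0$. Per-$\lambda$ procedure: $\alpha=2\ln2$, $[x]^+=\max\{x,0\}$, $p_2=([\frac{w_k}{\alpha(\lambda_s+\lambda_t)}-\frac1{c_{mk}}]^+,0)$,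 (for $b_{nk}>0$) $p_1=(1,\frac{a_m-c_{mk}}{b_{nk}})[\frac{w_kb_{nk}}{\alpha(b_{nk}(\lambda_s+\lambda_t)+(a_m-c_{mk})(\lambda_r+\lambda_t))}-\frac1{a_m}]^+$; $L_{mnk}(p^s,p^r,\lambda)=w_kR_{mnk}(p^s,p^r)-(\lambda_s+\lambda_t)p^s-(\lambda_r+\lambda_t)p^r$; $(p^s_{mnk}(\lambda),p^r_{mnk}(\lambda))$ equals $([\frac{w_k}{\alpha(\lambda_s+\lambda_t)}-\frac1{a_m}]^+,0)$ if $a_m\le c_{mk}$, $p_1$ if $a_m>c_{mk}$ and $\frac{c_{mk}}{\lambda_s+\lambda_t}<\frac{b_{nk}}{\lambda_r+\lambda_t}$, otherwise whichever of $p_1,p_2$ gives larger $L_{mnk}$. $A_{mnk}(\lambda)=L_{mnk}(p^s_{mnk}(\lambda),p^r_{mnk}(\lambda),\lambda)$; $k^*(m,n)\in\arg\max_kA_{mnk}(\lambda)$; $X^*$ an $N\times N$ permutation matrix maximizing $\sum x_{mn}A_{mnk^*(m,n)}(\lambda)$; $\phi^*_{mnk}(\lambda)=x^*_{mn}\mathbf 1[k=k^*(m,n)]$, $P^{s*}_{mnk}(\lambda)=\phi^*_{mnk}(\lambda)p^s_{mnk}(\lambda)$, $P^{r*}_{mnk}(\lambda)=\phi^*_{mnk}(\lambda)p^r_{mnk}(\lambda)$. Subgradient: $\theta(\lambda)=(P_s,P_r,P_t)-\sum_{m,n,k}(P^{s*}_{mnk}(\lambda),P^{r*}_{mnk}(\lambda),P^{s*}_{mnk}(\lambda)+P^{r*}_{mnk}(\lambda))$.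 Regions: $\mathcal R_1=\{\lambda\succeq0:\lambda_s+\lambda_t\ge\frac{\min_{\{k:w_k>0\}}w_k\min\{\min_{\{m:a_m>0\}}a_m,\min_{\{m,k:c_{mk}>0\}}c_{mk}\}}{4\alpha(\max_ma_m\min\{P_s,P_t\}+1)}\}$, $\mathcal R_2=\{\lambda\succeq0:\lambda_s+\lambda_t+\frac{\min_{\{m:a_m>0\}}a_m}{\max_{n,k}b_{nk}}(\lambda_r+\lambda_t)\ge\frac{\min_{\{k:w_k>0\}}w_k}{\alpha(\min\{P_s,P_t\}+1/\min_{\{m:a_m>0\}}a_m)}\}$. Projected subgradient updating onto a convex region $\mathcal R$: start from $\lambda^{(0)}\in\mathcal R$ and iterate $\lambda^{(l+1)}=\Pi_{\mathcal R}(\lambda^{(l)}-\nu^{(l)}\theta(\lambda^{(l)}))$, $\Pi_{\mathcal R}$ the Euclidean projection, $\nu^{(l)}>0$. DCDM algorithm: if some $c_{mk}>0$: run projected subgradient updating onto $\mathcal R_1$ (output $\lambda_1^*$); then set all $c_{mk}=0$ and run projected subgradient updating onto $\mathcal R_2$ with these modified gains (output $\lambda_2^*$); return $\arg\min_{\lambda\in\{\lambda_1^*,\lambda_2^*\}}g(\lambda)$. Otherwise, run projected subgradient updating onto $\mathcal R_2$ and return its output. *)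

theory Defs
  imports "HOL-Analysis.Analysis" "HOL-Library.Landau_Symbols" "HOL-Combinatorics.Permutations"
begin

(* Dual variables lambda = (lambda_s, lambda_r, lambda_t) as points of real x real x real,
   whose product metric is the Euclidean one on R^3. *)
type_synonym dual = "real \<times> real \<times> real"

definition lam_s :: "dual \<Rightarrow> real" where "lam_s l = fst l"
definition lam_r :: "dual \<Rightarrow> real" where "lam_r l = fst (snd l)"
definition lam_t :: "dual \<Rightarrow> real" where "lam_t l = snd (snd l)"

definition alpha :: real where "alpha = 2 * ln 2"

definition pplus :: "real \<Rightarrow> real" where "pplus x = max x 0"

(* water-filling level [x - 1/g]^+ ; for g = 0 the convention 1/0 = +infinity gives 0 *)
definition wlevel :: "real \<Rightarrow> real \<Rightarrow> real" where
  "wlevel x g = (if g > 0 then pplus (x - 1 / g) else 0)"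

(* channels m,n in {..<N}, users k in {..<K};  a m, b n k, c m k *)
definition rate :: "(nat \<Rightarrow> real) \<Rightarrow> (nat \<Rightarrow> nat \<Rightarrow> real) \<Rightarrow> (nat \<Rightarrow> nat \<Rightarrow> real)
    \<Rightarrow> nat \<Rightarrow> nat \<Rightarrow> nat \<Rightarrow> real \<times> real \<Rightarrow> real" where
  "rate a b c m n k p = 1/2 * min (log 2 (1 + a m * fst p))
                                   (log 2 (1 + c m k * fst p + b n k * snd p))"

definition Lag :: "(nat \<Rightarrow> real) \<Rightarrow> (nat \<Rightarrow> real) \<Rightarrow> (nat \<Rightarrow> nat \<Rightarrow> real) \<Rightarrow> (nat \<Rightarrow> nat \<Rightarrow> real)
    \<Rightarrow> nat \<Rightarrow> nat \<Rightarrow> nat \<Rightarrow> real \<times> real \<Rightarrow> dual \<Rightarrow> real" where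
  "Lag w a b c m n k p lam = w k * rate a b c m n k p
      - (lam_s lam + lam_t lam) * fst p - (lam_r lam + lam_t lam) * snd p"

definition p0 :: "(nat \<Rightarrow> real) \<Rightarrow> (nat \<Rightarrow> real) \<Rightarrow> nat \<Rightarrow> nat \<Rightarrow> dual \<Rightarrow> real \<times> real" where
  "p0 w a m k lam = (wlevel (w k / (alpha * (lam_s lam + lam_t lam))) (a m), 0)"

definition p2 :: "(nat \<Rightarrow> real) \<Rightarrow> (nat \<Rightarrow> nat \<Rightarrow> real) \<Rightarrow> nat \<Rightarrow> nat \<Rightarrow> dual \<Rightarrow> real \<times> real" where
  "p2 w c m k lam = (wlevel (w k / (alpha * (lam_s lam + lam_t lam))) (c m k), 0)"

definition p1 :: "(nat \<Rightarrow> real) \<Rightarrow> (nat \<Rightarrow> real) \<Rightarrow> (nat \<Rightarrow> nat \<Rightarrow> real) \<Rightarrow> (nat \<Rightarrow> nat \<Rightarrow> real)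
    \<Rightarrow> nat \<Rightarrow> nat \<Rightarrow> nat \<Rightarrow> dual \<Rightarrow> real \<times> real" where
  "p1 w a b c m n k lam =
     (let t = wlevel (w k * b n k / (alpha * (b n k * (lam_s lam + lam_t lam)
                      + (a m - c m k) * (lam_r lam + lam_t lam)))) (a m)
      in (t, (a m - c m k) / b n k * t))"

(* the condition c/(lam_s+lam_t) < b/(lam_r+lam_t), written cross-multiplied *)
definition p1_cond :: "(nat \<Rightarrow> nat \<Rightarrow> real) \<Rightarrow> (nat \<Rightarrow> nat \<Rightarrow> real) \<Rightarrow> nat \<Rightarrow> nat \<Rightarrow> nat \<Rightarrow> dual \<Rightarrow> bool" where
  "p1_cond b c m n k lam \<longleftrightarrow> c m k * (lam_r lam + lam_t lam) < b n k * (lam_s lam + lam_t lam)"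

(* admissible outputs (p^s_{mnk}(lambda), p^r_{mnk}(lambda)); ties in the comparison may be
   broken either way; p1 is only defined for b_{nk} > 0 *)
definition p_adm :: "(nat \<Rightarrow> real) \<Rightarrow> (nat \<Rightarrow> real) \<Rightarrow> (nat \<Rightarrow> nat \<Rightarrow> real) \<Rightarrow> (nat \<Rightarrow> nat \<Rightarrow> real)
    \<Rightarrow> nat \<Rightarrow> nat \<Rightarrow> nat \<Rightarrow> dual \<Rightarrow> real \<times> real \<Rightarrow> bool" where
  "p_adm w a b c m n k lam p \<longleftrightarrow>
     (if a m \<le> c m k then p = p0 w a m k lam
      else if b n k > 0 \<and> p1_cond b c m n k lam then p = p1 w a b c m n k lam
      else if b n k > 0 then
        (p = p1 w a b c m n k lam \<and> Lag w a b c m n k (p2 w c m k lam) lam \<le> Lag w a b c m n k (p1 w a b c m n k lam) lam)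
        \<or> (p = p2 w c m k lam \<and> Lag w a b c m n k (p1 w a b c m n k lam) lam \<le> Lag w a b c m n k (p2 w c m k lam) lam)
      else p = p2 w c m k lam)"

definition Aval :: "(nat \<Rightarrow> real) \<Rightarrow> (nat \<Rightarrow> real) \<Rightarrow> (nat \<Rightarrow> nat \<Rightarrow> real) \<Rightarrow> (nat \<Rightarrow> nat \<Rightarrow> real)
    \<Rightarrow> nat \<Rightarrow> nat \<Rightarrow> nat \<Rightarrow> dual \<Rightarrow> real" where
  "Aval w a b c m n k lam =
     (if a m \<le> c m k then Lag w a b c m n k (p0 w a m k lam) lam
      else if b n k > 0 \<and> p1_cond b c m n k lam then Lag w a b c m n k (p1 w a b c m n k lam) lam
      else if b n k > 0 then max (Lag w a b c m n k (p1 w a b c m n k lam) lam)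
                                 (Lag w a b c m n k (p2 w c m k lam) lam)
      else Lag w a b c m n k (p2 w c m k lam) lam)"

(* th is a subgradient theta(lambda) produced by the per-lambda procedure for some admissible
   choice of the power pairs, of k*(m,n) and of the permutation X* (encoded by sigma:
   x*_{mn} = 1 iff n = sigma m) *)
definition subgrad_choice :: "nat \<Rightarrow> nat \<Rightarrow> (nat \<Rightarrow> real) \<Rightarrow> (nat \<Rightarrow> real) \<Rightarrow> (nat \<Rightarrow> nat \<Rightarrow> real)
    \<Rightarrow> (nat \<Rightarrow> nat \<Rightarrow> real) \<Rightarrow> real \<Rightarrow> real \<Rightarrow> real \<Rightarrow> dual \<Rightarrow> dual \<Rightarrow> bool" where
  "subgrad_choice N K w a b c Ps Pr Pt lam th \<longleftrightarrow>
     (\<exists>ks \<sigma> p.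
        (\<forall>m<N. \<forall>n<N. \<forall>k<K. p_adm w a b c m n k lam (p m n k)) \<and>
        (\<forall>m<N. \<forall>n<N. ks m n < K \<and> (\<forall>k<K. Aval w a b c m n k lam \<le> Aval w a b c m n (ks m n) lam)) \<and>
        \<sigma> permutes {..<N} \<and>
        (\<forall>\<tau>. \<tau> permutes {..<N} \<longrightarrow>
           (\<Sum>m<N. Aval w a b c m (\<tau> m) (ks m (\<tau> m)) lam)
             \<le> (\<Sum>m<N. Aval w a b c m (\<sigma> m) (ks m (\<sigma> m)) lam)) \<and>
        th = (Ps - (\<Sum>m<N. fst (p m (\<sigma> m) (ks m (\<sigma> m)))),
              Pr - (\<Sum>m<N. snd (p m (\<sigma> m) (ks m (\<sigma> m)))),
              Pt - (\<Sum>m<N. fst (p m (\<sigma> m) (ks m (\<sigma> m))) + snd (p m (\<sigma> m) (ks m (\<sigma> m))))))"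

definition nonneg_dual :: "dual \<Rightarrow> bool" where
  "nonneg_dual lam \<longleftrightarrow> lam_s lam \<ge> 0 \<and> lam_r lam \<ge> 0 \<and> lam_t lam \<ge> 0"

definition wmin :: "nat \<Rightarrow> (nat \<Rightarrow> real) \<Rightarrow> real" where
  "wmin K w = Min {w k |k. k < K \<and> w k > 0}"

definition region1 :: "nat \<Rightarrow> nat \<Rightarrow> (nat \<Rightarrow> real) \<Rightarrow> (nat \<Rightarrow> real) \<Rightarrow> (nat \<Rightarrow> nat \<Rightarrow> real)
    \<Rightarrow> real \<Rightarrow> real \<Rightarrow> dual set" where
  "region1 N K w a c Ps Pt = {lam. nonneg_dual lam \<and>
     lam_s lam + lam_t lam \<ge>
       wmin K w * min (Min {a m |m. m < N \<and> a m > 0}) (Min {c m k |m k. m < N \<and> k < K \<and> c m k > 0})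
       / (4 * alpha * (Max {a m |m. m < N} * min Ps Pt + 1))}"

definition region2 :: "nat \<Rightarrow> nat \<Rightarrow> (nat \<Rightarrow> real) \<Rightarrow> (nat \<Rightarrow> real) \<Rightarrow> (nat \<Rightarrow> nat \<Rightarrow> real)
    \<Rightarrow> real \<Rightarrow> real \<Rightarrow> dual set" where
  "region2 N K w a b Ps Pt = {lam. nonneg_dual lam \<and>
     lam_s lam + lam_t lam
       + Min {a m |m. m < N \<and> a m > 0} / Max {b n k |n k. n < N \<and> k < K} * (lam_r lam + lam_t lam)
     \<ge> wmin K w / (alpha * (min Ps Pt + 1 / Min {a m |m. m < N \<and> a m > 0}))}"

definition psg_run :: "dual set \<Rightarrow> (dual \<Rightarrow> dual \<Rightarrow> bool) \<Rightarrow> (nat \<Rightarrow> dual) \<Rightarrow> (nat \<Rightarrow> real)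
    \<Rightarrow> (nat \<Rightarrow> dual) \<Rightarrow> bool" where
  "psg_run Reg sg lam nu th \<longleftrightarrow> lam 0 \<in> Reg \<and>
     (\<forall>l. nu l > 0 \<and> sg (lam l) (th l) \<and>
          lam (Suc l) = closest_point Reg (lam l - nu l *\<^sub>R th l))"

definition dcdm_step_subgradient :: "nat \<Rightarrow> nat \<Rightarrow> (nat \<Rightarrow> real) \<Rightarrow> (nat \<Rightarrow> real) \<Rightarrow> (nat \<Rightarrow> nat \<Rightarrow> real)
    \<Rightarrow> (nat \<Rightarrow> nat \<Rightarrow> real) \<Rightarrow> real \<Rightarrow> real \<Rightarrow> real \<Rightarrow> dual \<Rightarrow> bool" where
  "dcdm_step_subgradient N K w a b c Ps Pr Pt g \<longleftrightarrow>
     (if \<exists>m<N. \<exists>k<K. c m k > 0 then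
        (\<exists>lam nu th l. psg_run (region1 N K w a c Ps Pt) (subgrad_choice N K w a b c Ps Pr Pt) lam nu th
                        \<and> g = th l)
        \<or> (\<exists>lam nu th l. psg_run (region2 N K w a b Ps Pt) (subgrad_choice N K w a b (\<lambda>_ _. 0) Ps Pr Pt) lam nu th
                        \<and> g = th l)
      else
        (\<exists>lam nu th l. psg_run (region2 N K w a b Ps Pt) (subgrad_choice N K w a b c Ps Pr Pt) lam nu th
                        \<and> g = th l))"

definition gains_in :: "nat \<Rightarrow> nat \<Rightarrow> real \<Rightarrow> real \<Rightarrow> (nat \<Rightarrow> real) \<Rightarrow> (nat \<Rightarrow> nat \<Rightarrow> real)
    \<Rightarrow> (nat \<Rightarrow> nat \<Rightarrow> real) \<Rightarrow> bool" where
  "gains_in N K glo ghi a b c \<longleftrightarrow>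
     (\<forall>m<N. a m = 0 \<or> (glo \<le> a m \<and> a m \<le> ghi)) \<and>
     (\<forall>n<N. \<forall>k<K. b n k = 0 \<or> (glo \<le> b n k \<and> b n k \<le> ghi)) \<and>
     (\<forall>m<N. \<forall>k<K. c m k = 0 \<or> (glo \<le> c m k \<and> c m k \<le> ghi))"

end

theory Submission
  imports Defs
begin



lemma alpha_pos: "alpha > 0" unfolding alpha_def by simp

lemma wlevel_nn: "0 \<le> wlevel x g" unfolding wlevel_def pplus_def by auto
lemma wlevel_le: "wlevel x g \<le> max x 0"
proof -
  have "x - 1/g \<le> x" if "0 < g" using that by simp
  then show ?thesis unfolding wlevel_def pplus_def by (auto intro: le_max_iff_disj[THEN iffD2])
qed

lemma ratio_le: assumes "0 \<le> w" "w \<le> 1" "d > 0" "S \<ge> d"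
  shows "w / (alpha * S) \<le> 1 / (alpha * d)"
proof -
  have "w / (alpha * S) \<le> 1 / (alpha * S)" using assms alpha_pos
    by (simp add: divide_right_mono)
  also have "\<dots> \<le> 1 / (alpha * d)" using assms alpha_pos
    by (intro divide_left_mono mult_left_mono) auto
  finally show ?thesis .
qed

lemma term_bound:
  assumes w: "0 \<le> w k" "w k \<le> 1" and g: "0 \<le> a m" "0 \<le> c m k" "0 \<le> b n k"
    "b n k > 0 \<Longrightarrow> glo \<le> b n k" "a m \<le> ghi" "glo > 0" and d: "d > 0"
    and R: "lam_r lam + lam_t lam \<ge> 0"
    and h0: "a m \<le> c m k \<Longrightarrow> a m > 0 \<Longrightarrow> lam_s lam + lam_t lam \<ge> d"
    and h2: "c m k > 0 \<Longrightarrow> a m > c m k \<Longrightarrow> lam_s lam + lam_t lam \<ge> d"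
    and h1: "a m > c m k \<Longrightarrow> b n k > 0 \<Longrightarrow>
        b n k * (lam_s lam + lam_t lam) + (a m - c m k) * (lam_r lam + lam_t lam) \<ge> b n k * d"
    and p: "p_adm w a b c m n k lam p"
  shows "0 \<le> fst p \<and> fst p \<le> 1/(alpha*d) \<and> 0 \<le> snd p \<and> snd p \<le> ghi/glo * (1/(alpha*d))"
proof -
  let ?X = "1/(alpha*d)"
  have X: "?X > 0" using d alpha_pos by simp
  have gX: "ghi/glo * ?X \<ge> 0" using g X by simp
  have P0: "0 \<le> fst (p0 w a m k lam) \<and> fst (p0 w a m k lam) \<le> ?X \<and> snd (p0 w a m k lam) = 0"
    if "a m \<le> c m k"
  proof (cases "a m > 0")
    case True
    have "w k / (alpha * (lam_s lam + lam_t lam)) \<le> ?X"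
      using ratio_le[OF w d h0[OF that True]] .
    then show ?thesis using X wlevel_nn[of _ "a m"] wlevel_le[of _ "a m"] unfolding p0_def by (smt (verit) fst_conv snd_conv)
  next
    case False then show ?thesis using X unfolding p0_def wlevel_def by auto
  qed
  have P2: "0 \<le> fst (p2 w c m k lam) \<and> fst (p2 w c m k lam) \<le> ?X \<and> snd (p2 w c m k lam) = 0"
    if "a m > c m k"
  proof (cases "c m k > 0")
    case True
    have "w k / (alpha * (lam_s lam + lam_t lam)) \<le> ?X"
      using ratio_le[OF w d h2[OF True that]] .
    then show ?thesis using X wlevel_nn[of _ "c m k"] wlevel_le[of _ "c m k"] unfolding p2_def by (smt (verit) fst_conv snd_conv)
  next
    case False then show ?thesis using X unfolding p2_def wlevel_def by auto
  qed
  have P1: "0 \<le> fst (p1 w a b c m n k lam) \<and> fst (p1 w a b c m n k lam) \<le> ?X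
      \<and> 0 \<le> snd (p1 w a b c m n k lam) \<and> snd (p1 w a b c m n k lam) \<le> ghi/glo * ?X"
    if ac: "a m > c m k" and bp: "b n k > 0"
  proof -
    define D where "D = b n k * (lam_s lam + lam_t lam) + (a m - c m k) * (lam_r lam + lam_t lam)"
    define t where "t = wlevel (w k * b n k / (alpha * D)) (a m)"
    have D: "D \<ge> b n k * d" using h1[OF ac bp] unfolding D_def .
    have "w k * b n k / (alpha * D) = w k / (alpha * (D / b n k))" using bp by simp
    also have "\<dots> \<le> ?X" apply (rule ratio_le[OF w d]) using D bp by (simp add: field_simps)
    finally have t: "0 \<le> t" "t \<le> ?X" unfolding t_def
      using wlevel_nn wlevel_le[of "w k * b n k / (alpha * D)" "a m"] X
      by (smt (verit))+
    have q: "0 \<le> (a m - c m k) / b n k" using ac bp by simp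
    have q2: "(a m - c m k) / b n k \<le> ghi/glo"
    proof -
      have "(a m - c m k) / b n k \<le> ghi / b n k" using g bp by (intro divide_right_mono) auto
      also have "\<dots> \<le> ghi / glo" using g bp by (intro divide_left_mono) (auto intro: order_trans)
      finally show ?thesis .
    qed
    have "(a m - c m k) / b n k * t \<le> ghi/glo * ?X"
      using q q2 t by (intro mult_mono) (auto intro: order_trans)
    moreover have "0 \<le> (a m - c m k) / b n k * t" using q t(1) by (rule mult_nonneg_nonneg)
    ultimately show ?thesis using t unfolding p1_def Let_def t_def[symmetric] D_def[symmetric] by simp
  qed
  show ?thesis using p P0 P1 P2 X gX unfolding p_adm_def
    by (auto split: if_splits)
qed




lemma sg_bound:
  assumes sg: "subgrad_choice N K w a b c Ps Pr Pt lam th"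
    and P: "Ps > 0" "Pr > 0" "Pt > 0"
    and B: "\<And>m n k p. m < N \<Longrightarrow> n < N \<Longrightarrow> k < K \<Longrightarrow> p_adm w a b c m n k lam p \<Longrightarrow>
              0 \<le> fst p \<and> fst p \<le> X \<and> 0 \<le> snd p \<and> snd p \<le> Y"
  shows "norm th \<le> Ps + Pr + Pt + 2 * real N * (X + Y)"
proof -
  obtain ks \<sigma> p where H: "(\<forall>m<N. \<forall>n<N. \<forall>k<K. p_adm w a b c m n k lam (p m n k)) \<and>
        (\<forall>m<N. \<forall>n<N. ks m n < K \<and> (\<forall>k<K. Aval w a b c m n k lam \<le> Aval w a b c m n (ks m n) lam)) \<and>
        \<sigma> permutes {..<N} \<and>
        (\<forall>\<tau>. \<tau> permutes {..<N} \<longrightarrow>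
           (\<Sum>m<N. Aval w a b c m (\<tau> m) (ks m (\<tau> m)) lam)
             \<le> (\<Sum>m<N. Aval w a b c m (\<sigma> m) (ks m (\<sigma> m)) lam)) \<and>
        th = (Ps - (\<Sum>m<N. fst (p m (\<sigma> m) (ks m (\<sigma> m)))),
              Pr - (\<Sum>m<N. snd (p m (\<sigma> m) (ks m (\<sigma> m)))),
              Pt - (\<Sum>m<N. fst (p m (\<sigma> m) (ks m (\<sigma> m))) + snd (p m (\<sigma> m) (ks m (\<sigma> m)))))"
    by (insert sg[unfolded subgrad_choice_def], elim exE, rule that, assumption)
  have pa: "\<forall>m<N. \<forall>n<N. \<forall>k<K. p_adm w a b c m n k lam (p m n k)" using H by (rule conjunct1)
  have ks: "\<forall>m<N. \<forall>n<N. ks m n < K" using H[THEN conjunct2, THEN conjunct1] by simp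
  have sig: "\<sigma> permutes {..<N}" using H[THEN conjunct2, THEN conjunct2, THEN conjunct1] .
  have th: "th = (Ps - (\<Sum>m<N. fst (p m (\<sigma> m) (ks m (\<sigma> m)))),
              Pr - (\<Sum>m<N. snd (p m (\<sigma> m) (ks m (\<sigma> m)))),
              Pt - (\<Sum>m<N. fst (p m (\<sigma> m) (ks m (\<sigma> m))) + snd (p m (\<sigma> m) (ks m (\<sigma> m)))))"
    using H[THEN conjunct2, THEN conjunct2, THEN conjunct2, THEN conjunct2] .
  define q where "q m = p m (\<sigma> m) (ks m (\<sigma> m))" for m
  have qb: "0 \<le> fst (q m) \<and> fst (q m) \<le> X \<and> 0 \<le> snd (q m) \<and> snd (q m) \<le> Y" if "m < N" for m
  proof -
    have "\<sigma> m < N" using sig that permutes_in_image by fastforce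
    moreover have "ks m (\<sigma> m) < K" using ks that \<open>\<sigma> m < N\<close> by simp
    ultimately have "p_adm w a b c m (\<sigma> m) (ks m (\<sigma> m)) lam (q m)" unfolding q_def using pa that by simp
    then show ?thesis using B that \<open>\<sigma> m < N\<close> \<open>ks m (\<sigma> m) < K\<close> by simp
  qed
  define A where "A = (\<Sum>m<N. fst (q m))"
  define Bs where "Bs = (\<Sum>m<N. snd (q m))"
  have A1: "A \<le> (\<Sum>m<N. X)" unfolding A_def by (rule sum_mono) (use qb in auto)
  have B1: "Bs \<le> (\<Sum>m<N. Y)" unfolding Bs_def by (rule sum_mono) (use qb in auto)
  have A: "0 \<le> A" "A \<le> real N * X" unfolding A_def using qb A1[unfolded A_def]
    by (auto intro!: sum_nonneg)
  have Bs: "0 \<le> Bs" "Bs \<le> real N * Y" unfolding Bs_def using qb B1[unfolded Bs_def]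
    by (auto intro!: sum_nonneg)
  have th2: "th = (Ps - A, Pr - Bs, Pt - (A + Bs))"
    unfolding th A_def Bs_def q_def sum.distrib by simp
  have "norm th \<le> norm (Ps - A) + (norm (Pr - Bs) + norm (Pt - (A + Bs)))"
  proof -
    have "norm th \<le> norm (Ps - A) + norm (Pr - Bs, Pt - (A + Bs))" unfolding th2 by (rule norm_Pair_le)
    also have "\<dots> \<le> norm (Ps - A) + (norm (Pr - Bs) + norm (Pt - (A + Bs)))"
      by (rule add_left_mono, rule norm_Pair_le)
    finally show ?thesis .
  qed
  also have "\<dots> \<le> Ps + Pr + Pt + 2 * real N * (X + Y)"
  proof -
    have e1: "\<bar>Ps - A\<bar> \<le> Ps + A" using A P by linarith
    have e2: "\<bar>Pr - Bs\<bar> \<le> Pr + Bs" using Bs P by linarith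
    have e3: "\<bar>Pt - (A + Bs)\<bar> \<le> Pt + A + Bs" using A Bs P by linarith
    have e4: "2 * real N * (X + Y) = 2 * (real N * X) + 2 * (real N * Y)" by (simp add: algebra_simps)
    show ?thesis unfolding real_norm_def e4 using e1 e2 e3 A Bs by linarith
  qed
  finally show ?thesis .
qed




lemma closed_region1: "closed (region1 N K w a c Ps Pt)"
  unfolding region1_def nonneg_dual_def lam_s_def lam_r_def lam_t_def
  by (intro closed_Collect_conj closed_Collect_le continuous_on_const continuous_on_fst continuous_on_snd continuous_on_add continuous_on_id)

lemma closed_region2: "closed (region2 N K w a b Ps Pt)"
  unfolding region2_def nonneg_dual_def lam_s_def lam_r_def lam_t_def
  by (intro closed_Collect_conj closed_Collect_le continuous_on_const continuous_on_fst continuous_on_snd continuous_on_add continuous_on_id continuous_on_mult)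

lemma run_in:
  assumes "psg_run Reg sg lam nu th" "closed Reg"
  shows "lam l \<in> Reg \<and> sg (lam l) (th l)"
proof -
  have "lam l \<in> Reg"
  proof (induction l)
    case 0 then show ?case using assms unfolding psg_run_def by simp
  next
    case (Suc l)
    then have "Reg \<noteq> {}" by auto
    then show ?case using assms closest_point_in_set unfolding psg_run_def by metis
  qed
  then show ?thesis using assms unfolding psg_run_def by simp
qed

lemma Min_geI: "finite S \<Longrightarrow> \<exists>x. x \<in> S \<Longrightarrow> (\<And>y. y \<in> S \<Longrightarrow> L \<le> y) \<Longrightarrow> L \<le> Min S"
  by (subst Min_ge_iff) auto

lemma Max_leI: "finite S \<Longrightarrow> x \<in> S \<Longrightarrow> (\<And>y. y \<in> S \<Longrightarrow> y \<le> L) \<Longrightarrow> Max S \<le> L"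
  by (subst Max_le_iff) auto

lemma wmin_pos:
  assumes "\<forall>k<K. w k \<ge> 0" "(\<Sum>k<K. w k) = 1"
  shows "wmin K w > 0"
proof -
  have "\<exists>k<K. w k > 0"
  proof (rule ccontr)
    assume "\<not> ?thesis"
    then have "\<forall>k<K. w k = 0" using assms by force
    then have "(\<Sum>k<K. w k) = 0" by simp
    then show False using assms by simp
  qed
  then obtain k where k: "k < K" "w k > 0" by blast
  have fin: "finite {w k |k. k < K \<and> w k > 0}" by simp
  have "w k \<in> {w k |k. k < K \<and> w k > 0}" using k by blast
  then have "Min {w k |k. k < K \<and> w k > 0} \<in> {w k |k. k < K \<and> w k > 0}"
    using fin Min_in by blast
  then show ?thesis unfolding wmin_def by auto
qed

lemma w_le1:
  fixes w :: "nat \<Rightarrow> real"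
  assumes "\<forall>k<K. w k \<ge> 0" "(\<Sum>k<K. w k) = 1" "k < K"
  shows "w k \<le> 1"
proof -
  have "w k \<le> (\<Sum>k<K. w k)" using assms by (intro member_le_sum[of k "{..<K}" w]) auto
  then show ?thesis using assms by simp
qed

lemma minA_ge:
  assumes "gains_in N K glo ghi a b c" "m < N" "a m > 0"
  shows "glo \<le> Min {a m |m. m < N \<and> a m > 0}"
proof (rule Min_geI)
  show "finite {a m |m. m < N \<and> a m > 0}" by simp
  show "\<exists>x. x \<in> {a m |m. m < N \<and> a m > 0}" using assms by blast
  fix y assume "y \<in> {a m |m. m < N \<and> a m > 0}"
  then show "glo \<le> y" using assms unfolding gains_in_def by force
qed

lemma reg1_S:
  assumes W: "\<forall>k<K. w k \<ge> 0" "(\<Sum>k<K. w k) = 1" and P: "Ps > 0" "Pt > 0"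
    and G: "0 < glo" "glo \<le> ghi" and N: "N \<ge> 1" and g: "gains_in N K glo ghi a b c"
    and cpos: "\<exists>m<N. \<exists>k<K. c m k > 0"
    and lam: "lam \<in> region1 N K w a c Ps Pt" and m: "m < N" "a m > 0"
  shows "lam_s lam + lam_t lam \<ge> wmin K w * glo / (4 * alpha * (ghi * min Ps Pt + 1))"
proof -
  define minA where "minA = Min {a m |m. m < N \<and> a m > 0}"
  define minC where "minC = Min {c m k |m k. m < N \<and> k < K \<and> c m k > 0}"
  define maxA where "maxA = Max {a m |m. m < N}"
  have mA: "glo \<le> minA" unfolding minA_def using minA_ge[OF g m] .
  have mC: "glo \<le> minC" unfolding minC_def
  proof (rule Min_geI)
    have "finite {c m k |m k. m < N \<and> k < K}" by (rule finite_image_set2) auto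
    then show "finite {c m k |m k. m < N \<and> k < K \<and> c m k > 0}"
      by (rule finite_subset[rotated]) blast
    from cpos show "\<exists>x. x \<in> {c m k |m k. m < N \<and> k < K \<and> c m k > 0}" by blast
    fix y assume "y \<in> {c m k |m k. m < N \<and> k < K \<and> c m k > 0}"
    then show "glo \<le> y" using g unfolding gains_in_def by force
  qed
  have MA: "maxA \<le> ghi" unfolding maxA_def
  proof (rule Max_leI)
    show "finite {a m |m. m < N}" by simp
    show "a 0 \<in> {a m |m. m < N}" using N by auto
    fix y assume "y \<in> {a m |m. m < N}"
    then show "y \<le> ghi" using g G unfolding gains_in_def by force
  qed
  have MA0: "0 \<le> maxA" unfolding maxA_def
  proof -
    have "a m \<le> Max {a m |m. m < N}" using m by (intro Max_ge) auto
    then show "0 \<le> Max {a m |m. m < N}" using m by simp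
  qed
  have wp: "wmin K w > 0" using wmin_pos[OF W] .
  have mp: "0 \<le> min Ps Pt" using P by simp
  have "wmin K w * glo / (4 * alpha * (ghi * min Ps Pt + 1))
        \<le> wmin K w * min minA minC / (4 * alpha * (maxA * min Ps Pt + 1))"
  proof (rule frac_le)
    show "0 \<le> wmin K w * min minA minC" using wp mA mC G by simp
    show "wmin K w * glo \<le> wmin K w * min minA minC" using wp mA mC by simp
    show "0 < 4 * alpha * (maxA * min Ps Pt + 1)" using alpha_pos MA0 mp
      by (simp add: add_nonneg_pos)
    show "4 * alpha * (maxA * min Ps Pt + 1) \<le> 4 * alpha * (ghi * min Ps Pt + 1)"
      using alpha_pos MA mp by (simp add: mult_right_mono)
  qed
  also have "\<dots> \<le> lam_s lam + lam_t lam" using lam unfolding region1_def minA_def minC_def maxA_def by simp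
  finally show ?thesis .
qed

lemma reg2_S:
  assumes W: "\<forall>k<K. w k \<ge> 0" "(\<Sum>k<K. w k) = 1" and P: "Ps > 0" "Pt > 0"
    and G: "0 < glo" "glo \<le> ghi" and g: "gains_in N K glo ghi a b c"
    and lam: "lam \<in> region2 N K w a b Ps Pt" and m: "m < N" "a m > 0" and n: "n < N" "k < K" "b n k > 0"
  shows "b n k * (lam_s lam + lam_t lam) + a m * (lam_r lam + lam_t lam)
          \<ge> b n k * (wmin K w / (alpha * (min Ps Pt + 1 / glo)))"
proof -
  define minA where "minA = Min {a m |m. m < N \<and> a m > 0}"
  define maxB where "maxB = Max {b n k |n k. n < N \<and> k < K}"
  have mA: "glo \<le> minA" unfolding minA_def using minA_ge[OF g m] .
  have bM: "b n k \<le> maxB" unfolding maxB_def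
    by (rule Max_ge) (use n in \<open>auto intro: finite_image_set2\<close>)
  have aM: "minA \<le> a m" unfolding minA_def using m by (intro Min_le) auto
  have R: "lam_r lam + lam_t lam \<ge> 0" using lam unfolding region2_def nonneg_dual_def by simp
  have wp: "wmin K w > 0" using wmin_pos[OF W] .
  have mp: "0 \<le> min Ps Pt" using P by simp
  define S where "S = lam_s lam + lam_t lam"
  define Rr where "Rr = lam_r lam + lam_t lam"
  have thr: "wmin K w / (alpha * (min Ps Pt + 1 / minA)) \<le> S + minA / maxB * Rr"
    using lam unfolding region2_def minA_def maxB_def S_def Rr_def by simp
  have "wmin K w / (alpha * (min Ps Pt + 1 / glo)) \<le> wmin K w / (alpha * (min Ps Pt + 1 / minA))"
  proof (rule divide_left_mono)
    show "alpha * (min Ps Pt + 1 / minA) \<le> alpha * (min Ps Pt + 1 / glo)"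
      using alpha_pos mA G by (intro mult_left_mono add_left_mono divide_left_mono) auto
    show "0 \<le> wmin K w" using wp by simp
    show "0 < alpha * (min Ps Pt + 1 / glo) * (alpha * (min Ps Pt + 1 / minA))"
      using alpha_pos mA G mp by (intro mult_pos_pos add_nonneg_pos) auto
  qed
  also note thr
  finally have t2: "wmin K w / (alpha * (min Ps Pt + 1 / glo)) \<le> S + minA / maxB * Rr" .
  have "b n k * (minA / maxB) \<le> a m"
  proof -
    have "b n k * (minA / maxB) = minA * (b n k / maxB)" by simp
    also have "\<dots> \<le> minA * 1" using bM n mA G
      by (intro mult_left_mono) (auto simp: divide_le_eq_1)
    finally show ?thesis using aM by simp
  qed
  then have "b n k * (minA / maxB) * Rr \<le> a m * Rr" using R Rr_def by (intro mult_right_mono) auto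
  moreover have "b n k * (wmin K w / (alpha * (min Ps Pt + 1 / glo))) \<le> b n k * (S + minA / maxB * Rr)"
    using t2 n by (intro mult_left_mono) auto
  ultimately show ?thesis unfolding S_def[symmetric] Rr_def[symmetric] by (simp add: algebra_simps)
qed




lemma step_bound:
  assumes sg: "subgrad_choice N K w a b c' Ps Pr Pt lam th"
    and W: "\<forall>k<K. w k \<ge> 0" "(\<Sum>k<K. w k) = 1" and P: "Ps > 0" "Pr > 0" "Pt > 0"
    and G: "0 < glo" "glo \<le> ghi" and g: "gains_in N K glo ghi a b c'" and d: "d > 0"
    and R: "lam_r lam + lam_t lam \<ge> 0"
    and H0: "\<And>m k. m < N \<Longrightarrow> k < K \<Longrightarrow> a m \<le> c' m k \<Longrightarrow> a m > 0 \<Longrightarrow> lam_s lam + lam_t lam \<ge> d"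
    and H2: "\<And>m k. m < N \<Longrightarrow> k < K \<Longrightarrow> c' m k > 0 \<Longrightarrow> a m > c' m k \<Longrightarrow> lam_s lam + lam_t lam \<ge> d"
    and H1: "\<And>m n k. m < N \<Longrightarrow> n < N \<Longrightarrow> k < K \<Longrightarrow> a m > c' m k \<Longrightarrow> b n k > 0 \<Longrightarrow>
        b n k * (lam_s lam + lam_t lam) + (a m - c' m k) * (lam_r lam + lam_t lam) \<ge> b n k * d"
  shows "norm th \<le> Ps + Pr + Pt + 2 * real N * (1/(alpha*d) + ghi/glo * (1/(alpha*d)))"
proof (rule sg_bound[OF sg P])
  fix m n k p assume mnk: "m < N" "n < N" "k < K" and pa: "p_adm w a b c' m n k lam p"
  have ga: "0 \<le> a m" "a m \<le> ghi" using g G mnk unfolding gains_in_def by force+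
  have gb: "0 \<le> b n k" "b n k > 0 \<Longrightarrow> glo \<le> b n k" using g G mnk unfolding gains_in_def by force+
  have gc: "0 \<le> c' m k" using g G mnk unfolding gains_in_def by force
  show "0 \<le> fst p \<and> fst p \<le> 1/(alpha*d) \<and> 0 \<le> snd p \<and> snd p \<le> ghi/glo * (1/(alpha*d))"
    by (rule term_bound[where w=w and a=a and b=b and c=c' and m=m and n=n and k=k])
       (use W mnk w_le1[OF W] ga gb gc G d R H0 H2 H1 pa in auto)
qed




theorem lemma4:
  fixes K :: nat and w :: "nat \<Rightarrow> real" and Ps Pr Pt glo ghi :: real
  assumes "K \<ge> 1" and "\<forall>k<K. w k \<ge> 0" and "(\<Sum>k<K. w k) = 1"
    and "Ps > 0" and "Pr > 0" and "Pt > 0"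
    and "0 < glo" and "glo \<le> ghi"
  shows "\<exists>\<theta>max :: nat \<Rightarrow> real. \<theta>max \<in> O(\<lambda>N. (real N) ^ 2) \<and>
           (\<forall>N a b c g. N \<ge> 1 \<and> gains_in N K glo ghi a b c \<and>
              dcdm_step_subgradient N K w a b c Ps Pr Pt g \<longrightarrow> norm g \<le> \<theta>max N)"
proof -
  note W = assms(2,3) and P = assms(4,5,6) and G = assms(7,8)
  define d1 where "d1 = wmin K w * glo / (4 * alpha * (ghi * min Ps Pt + 1))"
  define d2 where "d2 = wmin K w / (alpha * (min Ps Pt + 1 / glo))"
  define d where "d = min d1 d2"
  have wp: "wmin K w > 0" using wmin_pos[OF W] .
  have d1p: "d1 > 0" unfolding d1_def using wp G P alpha_pos
    by (intro divide_pos_pos mult_pos_pos add_nonneg_pos) auto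
  have d2p: "d2 > 0" unfolding d2_def using wp G P alpha_pos
    by (intro divide_pos_pos mult_pos_pos add_nonneg_pos) auto
  have dp: "d > 0" unfolding d_def using d1p d2p by simp
  define Z where "Z = 1/(alpha*d) + ghi/glo * (1/(alpha*d))"
  have Zp: "Z \<ge> 0" unfolding Z_def using dp alpha_pos G by simp
  define C where "C = Ps + Pr + Pt + 2 * Z"
  have key: "norm g \<le> Ps + Pr + Pt + 2 * real N * Z"
    if N: "N \<ge> 1" and g: "gains_in N K glo ghi a b c" and dc: "dcdm_step_subgradient N K w a b c Ps Pr Pt g"
    for N a b c g
  proof -
    have g0: "gains_in N K glo ghi a b (\<lambda>_ _. 0)" using g unfolding gains_in_def by simp
    have R1: ?thesis if run: "psg_run (region1 N K w a c Ps Pt) (subgrad_choice N K w a b c Ps Pr Pt) lam nu th"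
      and gth: "g = th l" and cpos: "\<exists>m<N. \<exists>k<K. c m k > 0" for lam nu th l
    proof -
      have r: "lam l \<in> region1 N K w a c Ps Pt" "subgrad_choice N K w a b c Ps Pr Pt (lam l) (th l)"
        using run_in[OF run closed_region1] by auto
      have S: "lam_s (lam l) + lam_t (lam l) \<ge> d" if "m < N" "a m > 0" for m
        using reg1_S[OF W P(1,3) G N g cpos r(1) that] unfolding d_def d1_def by linarith
      have R: "lam_r (lam l) + lam_t (lam l) \<ge> 0" using r(1) unfolding region1_def nonneg_dual_def by simp
      have gc: "0 \<le> c m k" if "m < N" "k < K" for m k using g G that unfolding gains_in_def by force
      have gb: "0 \<le> b n k" if "n < N" "k < K" for n k using g G that unfolding gains_in_def by force
      show ?thesis unfolding gth Z_def
      proof (rule step_bound[OF r(2) W P G g dp R])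
        fix m k assume "m < N" "k < K" "a m \<le> c m k" "a m > 0"
        then show "lam_s (lam l) + lam_t (lam l) \<ge> d" using S by blast
      next
        fix m k assume "m < N" "k < K" "c m k > 0" "a m > c m k"
        then show "lam_s (lam l) + lam_t (lam l) \<ge> d" using S by force
      next
        fix m n k assume mnk: "m < N" "n < N" "k < K" "a m > c m k" "b n k > 0"
        then have "a m > 0" using gc[of m k] by linarith
        then have "b n k * d \<le> b n k * (lam_s (lam l) + lam_t (lam l))"
          using S mnk by (intro mult_left_mono) auto
        moreover have "0 \<le> (a m - c m k) * (lam_r (lam l) + lam_t (lam l))" using mnk R by simp
        ultimately show "b n k * (lam_s (lam l) + lam_t (lam l)) + (a m - c m k) * (lam_r (lam l) + lam_t (lam l)) \<ge> b n k * d"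
          by linarith
      qed
    qed
    have R2: ?thesis if run: "psg_run (region2 N K w a b Ps Pt) (subgrad_choice N K w a b c' Ps Pr Pt) lam nu th"
      and gth: "g = th l" and c0: "\<forall>m<N. \<forall>k<K. c' m k = 0" for lam nu th l c'
    proof -
      have r: "lam l \<in> region2 N K w a b Ps Pt" "subgrad_choice N K w a b c' Ps Pr Pt (lam l) (th l)"
        using run_in[OF run closed_region2] by auto
      have R: "lam_r (lam l) + lam_t (lam l) \<ge> 0" using r(1) unfolding region2_def nonneg_dual_def by simp
      have gc': "gains_in N K glo ghi a b c'" using g c0 unfolding gains_in_def by simp
      show ?thesis unfolding gth Z_def
      proof (rule step_bound[OF r(2) W P G gc' dp R])
        fix m k assume "m < N" "k < K" "a m \<le> c' m k" "a m > 0"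
        then show "lam_s (lam l) + lam_t (lam l) \<ge> d" using c0 by force
      next
        fix m k assume "m < N" "k < K" "c' m k > 0" "a m > c' m k"
        then show "lam_s (lam l) + lam_t (lam l) \<ge> d" using c0 by force
      next
        fix m n k assume mnk: "m < N" "n < N" "k < K" "a m > c' m k" "b n k > 0"
        then have am: "a m > 0" and cz: "c' m k = 0" using c0 by auto
        have "b n k * d \<le> b n k * d2" unfolding d_def using mnk by (intro mult_left_mono) auto
        also have "\<dots> \<le> b n k * (lam_s (lam l) + lam_t (lam l)) + a m * (lam_r (lam l) + lam_t (lam l))"
          unfolding d2_def using reg2_S[OF W P(1,3) G g r(1) mnk(1) am mnk(2,3,5)] .
        finally show "b n k * (lam_s (lam l) + lam_t (lam l)) + (a m - c' m k) * (lam_r (lam l) + lam_t (lam l)) \<ge> b n k * d"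
          using cz by simp
      qed
    qed
    show ?thesis
    proof (cases "\<exists>m<N. \<exists>k<K. c m k > 0")
      case True
      then have "(\<exists>lam nu th l. psg_run (region1 N K w a c Ps Pt) (subgrad_choice N K w a b c Ps Pr Pt) lam nu th \<and> g = th l)
        \<or> (\<exists>lam nu th l. psg_run (region2 N K w a b Ps Pt) (subgrad_choice N K w a b (\<lambda>_ _. 0) Ps Pr Pt) lam nu th \<and> g = th l)"
        using dc unfolding dcdm_step_subgradient_def by simp
      then show ?thesis
      proof
        assume "\<exists>lam nu th l. psg_run (region1 N K w a c Ps Pt) (subgrad_choice N K w a b c Ps Pr Pt) lam nu th \<and> g = th l"
        then show ?thesis using R1 True by blast
      next
        assume "\<exists>lam nu th l. psg_run (region2 N K w a b Ps Pt) (subgrad_choice N K w a b (\<lambda>_ _. 0) Ps Pr Pt) lam nu th \<and> g = th l"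
        then obtain lam nu th l where "psg_run (region2 N K w a b Ps Pt) (subgrad_choice N K w a b (\<lambda>_ _. 0) Ps Pr Pt) lam nu th" "g = th l" by blast
        then show ?thesis using R2[of "\<lambda>_ _. 0"] by auto
      qed
    next
      case False
      then have c0: "\<forall>m<N. \<forall>k<K. c m k = 0" using g G unfolding gains_in_def by force
      have "\<exists>lam nu th l. psg_run (region2 N K w a b Ps Pt) (subgrad_choice N K w a b c Ps Pr Pt) lam nu th \<and> g = th l"
        using dc False unfolding dcdm_step_subgradient_def by simp
      then obtain lam nu th l where "psg_run (region2 N K w a b Ps Pt) (subgrad_choice N K w a b c Ps Pr Pt) lam nu th" "g = th l" by blast
      then show ?thesis using R2[of c] c0 by auto
    qed
  qed
  show ?thesis
  proof (intro exI conjI allI impI)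
    show "(\<lambda>N. C * (real N)^2) \<in> O(\<lambda>N. (real N) ^ 2)" by simp
  next
    fix N a b c g
    assume h: "N \<ge> 1 \<and> gains_in N K glo ghi a b c \<and> dcdm_step_subgradient N K w a b c Ps Pr Pt g"
    then have k: "norm g \<le> Ps + Pr + Pt + 2 * real N * Z" using key by blast
    have n1: "1 \<le> real N" using h by simp
    have n2: "real N \<le> (real N)^2" using n1 by (simp add: power2_eq_square)
    have n3: "1 \<le> (real N)^2" using n1 n2 by linarith
    have "Ps + Pr + Pt + 2 * real N * Z \<le> (Ps + Pr + Pt) * (real N)^2 + 2 * Z * (real N)^2"
      using n2 n3 P Zp mult_left_mono[OF n3, of "Ps+Pr+Pt"] mult_left_mono[OF n2, of "2*Z"]
      by (simp add: algebra_simps)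
    then show "norm g \<le> C * (real N)^2" using k unfolding C_def by (simp add: algebra_simps)
  qed
qed


end
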